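(* Let $\alpha$ be a nonzero real number. A regular curve in $\mathbb S^2$ with constant curvature, not passing through $N$, is an $\alpha$-stationary curve if and only if one of the following holds: (1) it is contained in a geodesic (great circle) passing through $N$ (this case occurs for every value of $\alpha$); (2) it is contained in a circle of radius $r\in(0,\pi)$ centered at $N$ and $\alpha=-r\cot(r)$.
   Context: $\mathbb S^2\subset\mathbb R^3$ is the unit sphere with the Euclidean inner product. It is parametrized by $\Psi(u,v)=(\sin u\cos v,\sin u\sin v,\cos u)$, and $N=(0,0,1)$. The spherical distance from $\Psi(u,v)$ to $N$ is $u\in[0,\pi]$. The circle of radius $r$ centered at $N$ is $\{\Psi(r,v)\}$. For a regular curve $\gamma(t)=\Psi(u(t),v(t))$, the unit normal is $\mathbf n=(\gamma'\times\gamma)/|\gamma'|$ and the curvature is $\kappa=\langle\gamma'',\mathbf n\rangle/|\gamma'|^2$. The energy is $$E_\alpha[\gamma]=\int_\gamma \mathsf d^\alpha ds=\int u^\alpha\sqrt{u'^2+\sin^2(u)v'^2}\,dt,$$ where $\mathsf d$ is the distance to $N$. An $\alpha$-stationary curve is a critical point of $E_\alpha$, i.e. $(u,v)$ satisfies its Euler–Lagrange equations. Throughout the paper, $\alpha\ne0$ and curves avoid $N$. *)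

theory Defs
  imports "HOL-Analysis.Analysis" "HOL-Analysis.Cross3"
begin

definition Psi :: "real \<Rightarrow> real \<Rightarrow> real^3" where
  "Psi u v = vector [sin u * cos v, sin u * sin v, cos u]"

definition NP :: "real^3" where
  "NP = vector [0, 0, 1]"

definition curve :: "(real \<Rightarrow> real) \<Rightarrow> (real \<Rightarrow> real) \<Rightarrow> real \<Rightarrow> real^3" where
  "curve u v t = Psi (u t) (v t)"

text \<open>Regular C^2-type curve on an open interval I, avoiding N, with u the
  spherical distance to N (so u in (0, pi]).\<close>
definition regular_curve :: "(real \<Rightarrow> real) \<Rightarrow> (real \<Rightarrow> real) \<Rightarrow> real set \<Rightarrow> bool" where
  "regular_curve u v I \<longleftrightarrow>
     (\<forall>t\<in>I. u differentiable (at t) \<and> v differentiable (at t)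
        \<and> deriv u differentiable (at t) \<and> deriv v differentiable (at t)
        \<and> 0 < u t \<and> u t \<le> pi
        \<and> vector_derivative (curve u v) (at t) \<noteq> 0)"

definition unit_normal :: "(real \<Rightarrow> real^3) \<Rightarrow> real \<Rightarrow> real^3" where
  "unit_normal g t = (1 / norm (vector_derivative g (at t))) *\<^sub>R
      cross3 (vector_derivative g (at t)) (g t)"

definition curvature :: "(real \<Rightarrow> real^3) \<Rightarrow> real \<Rightarrow> real" where
  "curvature g t =
     (vector_derivative (\<lambda>s. vector_derivative g (at s)) (at t) \<bullet> unit_normal g t)
       / (norm (vector_derivative g (at t)))\<^sup>2"

definition constant_curvature :: "(real \<Rightarrow> real^3) \<Rightarrow> real set \<Rightarrow> bool" where
  "constant_curvature g I \<longleftrightarrow> (\<exists>c. \<forall>t\<in>I. curvature g t = c)"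

definition speed :: "(real \<Rightarrow> real) \<Rightarrow> (real \<Rightarrow> real) \<Rightarrow> real \<Rightarrow> real" where
  "speed u v t = sqrt ((deriv u t)\<^sup>2 + (sin (u t))\<^sup>2 * (deriv v t)\<^sup>2)"

text \<open>Euler--Lagrange equations of L = u^alpha sqrt(u'^2 + sin^2(u) v'^2):
  d/dt (dL/du') = dL/du and d/dt (dL/dv') = dL/dv = 0.\<close>
definition alpha_stationary :: "real \<Rightarrow> (real \<Rightarrow> real) \<Rightarrow> (real \<Rightarrow> real) \<Rightarrow> real set \<Rightarrow> bool" where
  "alpha_stationary \<alpha> u v I \<longleftrightarrow>
     (\<forall>t\<in>I.
        ((\<lambda>s. u s powr \<alpha> * deriv u s / speed u v s) has_real_derivative
           (\<alpha> * u t powr (\<alpha> - 1) * speed u v t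
            + u t powr \<alpha> * sin (u t) * cos (u t) * (deriv v t)\<^sup>2 / speed u v t)) (at t)
      \<and> ((\<lambda>s. u s powr \<alpha> * (sin (u s))\<^sup>2 * deriv v s / speed u v s) has_real_derivative 0) (at t))"

definition great_circle :: "real^3 \<Rightarrow> (real^3) set" where
  "great_circle w = {x. norm x = 1 \<and> x \<bullet> w = 0}"

definition circle_N :: "real \<Rightarrow> (real^3) set" where
  "circle_N r = {Psi r v | v. True}"

end

theory Submission
  imports Defs
begin


lemma vec3_deriv:
  assumes "(f has_real_derivative f') (at t)" "(g has_real_derivative g') (at t)"
    "(h has_real_derivative h') (at t)"
  shows "((\<lambda>s. vector [f s, g s, h s] :: real^3) has_vector_derivative vector [f', g', h']) (at t)"
proof -
  have e: "\<And>x y z. (vector [x, y, z] :: real^3) = x *\<^sub>R axis 1 1 + y *\<^sub>R axis 2 1 + z *\<^sub>R axis 3 1"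
    by (simp add: vec_eq_iff forall_3 vector_3 axis_def)
  have f: "\<And>f f' c. (f has_real_derivative f') (at t) \<Longrightarrow> ((\<lambda>s. f s *\<^sub>R (c::real^3)) has_vector_derivative f' *\<^sub>R c) (at t)"
    using has_vector_derivative_scaleR[OF _ has_vector_derivative_const] by fastforce
  show ?thesis unfolding e
    by (intro has_vector_derivative_add f assms)
qed

definition Vel :: "(real \<Rightarrow> real) \<Rightarrow> (real \<Rightarrow> real) \<Rightarrow> real \<Rightarrow> real^3" where
  "Vel u v t = vector [deriv u t * cos (u t) * cos (v t) - deriv v t * sin (u t) * sin (v t),
     deriv u t * cos (u t) * sin (v t) + deriv v t * sin (u t) * cos (v t), - deriv u t * sin (u t)]"

definition Acc :: "(real \<Rightarrow> real) \<Rightarrow> (real \<Rightarrow> real) \<Rightarrow> real \<Rightarrow> real^3" where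
  "Acc u v t = (let a = deriv u t; b = deriv v t; a2 = deriv (deriv u) t; b2 = deriv (deriv v) t;
     cu = cos (u t); su = sin (u t); cv = cos (v t); sv = sin (v t) in
   vector [a2*cu*cv - a*a* su*cv - 2*a*b*cu* sv - b2* su* sv - b*b* su*cv,
           a2*cu* sv - a*a* su* sv + 2*a*b*cu*cv + b2* su*cv - b*b* su* sv,
           - a2* su - a*a*cu])"

definition Nm :: "(real \<Rightarrow> real) \<Rightarrow> (real \<Rightarrow> real) \<Rightarrow> real \<Rightarrow> real" where
  "Nm u v t = (let a = deriv u t; b = deriv v t; a2 = deriv (deriv u) t; b2 = deriv (deriv v) t;
     co = cos (u t); s = sin (u t) in s*b*a2 - s* s *co*b^3 - 2*a*a*b*co - s*a*b2)"

lemma curve_deriv: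
  assumes "u differentiable (at t)" "v differentiable (at t)"
  shows "(curve u v has_vector_derivative Vel u v t) (at t)"
proof -
  have du: "(u has_real_derivative deriv u t) (at t)" and dv: "(v has_real_derivative deriv v t) (at t)"
    using assms by (simp_all add: DERIV_deriv_iff_real_differentiable)
  have c: "curve u v = (\<lambda>s. vector [sin (u s) * cos (v s), sin (u s) * sin (v s), cos (u s)])"
    by (auto simp: curve_def Psi_def)
  have d1: "((\<lambda>s. sin (u s) * cos (v s)) has_real_derivative
     (deriv u t * cos (u t) * cos (v t) - deriv v t * sin (u t) * sin (v t))) (at t)"
    by (rule derivative_eq_intros du dv refl)+ (simp add: algebra_simps)
  have d2: "((\<lambda>s. sin (u s) * sin (v s)) has_real_derivative
     (deriv u t * cos (u t) * sin (v t) + deriv v t * sin (u t) * cos (v t))) (at t)"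
    by (rule derivative_eq_intros du dv refl)+ (simp add: algebra_simps)
  have d3: "((\<lambda>s. cos (u s)) has_real_derivative (- deriv u t * sin (u t))) (at t)"
    by (rule derivative_eq_intros du dv refl)+ (simp add: algebra_simps)
  show ?thesis unfolding c Vel_def by (rule vec3_deriv[OF d1 d2 d3])
qed

lemma id_norm:
  fixes a b cu su cv sv :: real
  assumes "cu^2 + su^2 = 1" "cv^2 + sv^2 = 1"
  shows "(a * cu * cv - b * su * sv)^2 + (a * cu * sv + b * su * cv)^2 + (- a * su)^2 = a^2 + su^2 * b^2"
  using assms by algebra

lemma id_curv:
  fixes a b a2 b2 cu su cv sv :: real
  assumes "cu^2 + su^2 = 1" "cv^2 + sv^2 = 1"
  defines "V1 \<equiv> a * cu * cv - b * su * sv" and "V2 \<equiv> a * cu * sv + b * su * cv" and "V3 \<equiv> - a * su"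
    and "A1 \<equiv> a2 * cu * cv - a * a * su * cv - 2 * a * b * cu * sv - b2 * su * sv - b * b * su * cv"
    and "A2 \<equiv> a2 * cu * sv - a * a * su * sv + 2 * a * b * cu * cv + b2 * su * cv - b * b * su * sv"
    and "A3 \<equiv> - a2 * su - a * a * cu"
    and "G1 \<equiv> su * cv" and "G2 \<equiv> su * sv" and "G3 \<equiv> cu"
  shows "A1 * (V2 * G3 - V3 * G2) + A2 * (V3 * G1 - V1 * G3) + A3 * (V1 * G2 - V2 * G1)
     = su * b * a2 - su * su * cu * b^3 - 2 * a * a * b * cu - su * a * b2"
  using assms(1,2) unfolding assms(3-) by algebra

lemma Vel_deriv:
  assumes "u differentiable (at t)" "v differentiable (at t)"
    "deriv u differentiable (at t)" "deriv v differentiable (at t)"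
  shows "(Vel u v has_vector_derivative Acc u v t) (at t)"
proof -
  have du: "(u has_real_derivative deriv u t) (at t)" and dv: "(v has_real_derivative deriv v t) (at t)"
   and ddu: "(deriv u has_real_derivative deriv (deriv u) t) (at t)" and ddv: "(deriv v has_real_derivative deriv (deriv v) t) (at t)"
    using assms by (simp_all add: DERIV_deriv_iff_real_differentiable)
  have c: "Vel u v = (\<lambda>t. vector [deriv u t * cos (u t) * cos (v t) - deriv v t * sin (u t) * sin (v t),
     deriv u t * cos (u t) * sin (v t) + deriv v t * sin (u t) * cos (v t), - deriv u t * sin (u t)])"
    by (auto simp: Vel_def)
  have d1: "((\<lambda>t. deriv u t * cos (u t) * cos (v t) - deriv v t * sin (u t) * sin (v t)) has_real_derivative
     (deriv (deriv u) t * cos (u t) * cos (v t) - deriv u t * deriv u t * sin (u t) * cos (v t) - 2 * deriv u t * deriv v t * cos (u t) * sin (v t)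
      - deriv (deriv v) t * sin (u t) * sin (v t) - deriv v t * deriv v t * sin (u t) * cos (v t))) (at t)"
    by (rule derivative_eq_intros du dv ddu ddv refl)+ (simp add: algebra_simps)
  have d2: "((\<lambda>t. deriv u t * cos (u t) * sin (v t) + deriv v t * sin (u t) * cos (v t)) has_real_derivative
     (deriv (deriv u) t * cos (u t) * sin (v t) - deriv u t * deriv u t * sin (u t) * sin (v t) + 2 * deriv u t * deriv v t * cos (u t) * cos (v t)
      + deriv (deriv v) t * sin (u t) * cos (v t) - deriv v t * deriv v t * sin (u t) * sin (v t))) (at t)"
    by (rule derivative_eq_intros du dv ddu ddv refl)+ (simp add: algebra_simps)
  have d3: "((\<lambda>t. - deriv u t * sin (u t)) has_real_derivative
     (- deriv (deriv u) t * sin (u t) - deriv u t * deriv u t * cos (u t))) (at t)"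
    by (rule derivative_eq_intros du dv ddu ddv refl)+ (simp add: algebra_simps)
  show ?thesis unfolding c Acc_def Let_def by (rule vec3_deriv[OF d1 d2 d3])
qed

lemma geom:
  assumes reg: "regular_curve u v I" and I: "open I" "t \<in> I"
  shows "vector_derivative (curve u v) (at t) = Vel u v t"
   and "norm (Vel u v t) = speed u v t"
   and "speed u v t > 0"
   and "curvature (curve u v) t = Nm u v t / speed u v t ^ 3"
proof -
  have VD: "vector_derivative (curve u v) (at y) = Vel u v y" if "y \<in> I" for y
    using reg that unfolding regular_curve_def by (intro vector_derivative_at curve_deriv) auto
  show 1: "vector_derivative (curve u v) (at t) = Vel u v t" using VD I by auto
  have "Vel u v t \<bullet> Vel u v t = (deriv u t)^2 + (sin (u t))^2 * (deriv v t)^2"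
    unfolding Vel_def inner_vec_def sum_3 vector_3 inner_real_def
    using id_norm[of "cos (u t)" "sin (u t)" "cos (v t)" "sin (v t)" "deriv u t" "deriv v t"]
    by (simp add: power2_eq_square)
  then show 2: "norm (Vel u v t) = speed u v t" by (simp add: norm_eq_sqrt_inner speed_def)
  have "Vel u v t \<noteq> 0" using reg I 1 unfolding regular_curve_def by auto
  then show 3: "speed u v t > 0" using 2 by (metis zero_less_norm_iff)
  have A: "vector_derivative (\<lambda>s. vector_derivative (curve u v) (at s)) (at t) = Acc u v t"
  proof (rule vector_derivative_at)
    show "((\<lambda>s. vector_derivative (curve u v) (at s)) has_vector_derivative Acc u v t) (at t)"
      apply (rule has_vector_derivative_transform_within_open[of "Vel u v", OF _ I])
      using reg I unfolding regular_curve_def apply (intro Vel_deriv; auto)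
      using VD by auto
  qed
  have N: "Acc u v t \<bullet> cross3 (Vel u v t) (curve u v t) = Nm u v t"
    unfolding Acc_def Vel_def Nm_def Let_def curve_def Psi_def cross3_def inner_vec_def sum_3 vector_3 inner_real_def
    by (intro id_curv sin_cos_squared_add2)
  show "curvature (curve u v) t = Nm u v t / speed u v t ^ 3"
    unfolding curvature_def unit_normal_def A 1 2 inner_scaleR_right N using 3
    by (simp add: power2_eq_square power3_eq_cube)
qed


lemma loc_const_deriv:
  fixes f :: "real \<Rightarrow> real"
  assumes "open S" "y \<in> S" "\<And>z. z \<in> S \<Longrightarrow> f z = c" "(f has_real_derivative D) (at y)"
  shows "D = 0"
proof -
  have "((\<lambda>z. c) has_real_derivative D) (at y)"
    by (rule has_field_derivative_transform_within_open[OF assms(4,1,2)]) (simp add: assms(3))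
  thus ?thesis using DERIV_const DERIV_unique by blast
qed

lemma zero_deriv_on:
  fixes f :: "real \<Rightarrow> real"
  assumes "open S" "y \<in> S" "\<And>z. z \<in> S \<Longrightarrow> f z = c"
  shows "(f has_real_derivative 0) (at y)"
  by (rule has_field_derivative_transform_within_open[OF DERIV_const assms(1,2)]) (simp add: assms(3))

lemma ev_sign:
  fixes f :: "real \<Rightarrow> real"
  assumes "isCont f t" "f t \<noteq> 0"
  shows "eventually (\<lambda>s. sgn (f s) = sgn (f t)) (nhds t)"
proof (cases "f t > 0")
  case True
  have "eventually (\<lambda>s. 0 < f s) (at t)"
    using order_tendstoD(1)[OF assms(1)[unfolded isCont_def] True] .
  then have "eventually (\<lambda>s. 0 < f s) (nhds t)" using True eventually_nhds_conv_at by blast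
  then show ?thesis by (rule eventually_mono) (use True in auto)
next
  case False
  then have F: "f t < 0" using assms(2) by auto
  have "eventually (\<lambda>s. f s < 0) (at t)"
    using order_tendstoD(2)[OF assms(1)[unfolded isCont_def] F] .
  then have "eventually (\<lambda>s. f s < 0) (nhds t)" using F eventually_nhds_conv_at by blast
  then show ?thesis by (rule eventually_mono) (use F in auto)
qed

lemma u_lt_pi:
  assumes reg: "regular_curve u v I" and I: "open I" "t \<in> I"
  shows "u t < pi"
proof (rule ccontr)
  assume "\<not> u t < pi"
  then have ut: "u t = pi" using reg I unfolding regular_curve_def by force
  obtain d where d: "d > 0" "ball t d \<subseteq> I" using I open_contains_ball by blast
  have du: "(u has_real_derivative deriv u t) (at t)"
    using reg I unfolding regular_curve_def by (simp add: DERIV_deriv_iff_real_differentiable)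
  have "deriv u t = 0"
  proof (rule DERIV_local_max[OF du d(1)], intro allI impI)
    fix y assume "\<bar>t - y\<bar> < d"
    then have "y \<in> I" using d by (auto simp: dist_real_def)
    then show "u y \<le> u t" using reg ut unfolding regular_curve_def by auto
  qed
  then have "speed u v t = 0" by (simp add: speed_def ut)
  then show False using geom(3)[OF reg I] by simp
qed

lemma speed_deriv:
  assumes reg: "regular_curve u v I" and I: "open I" "t \<in> I"
  shows "(speed u v has_real_derivative
     (deriv u t * deriv (deriv u) t + sin (u t) * cos (u t) * deriv u t * (deriv v t)^2
      + (sin (u t))^2 * deriv v t * deriv (deriv v) t) / speed u v t) (at t)"
proof -
  have du: "(u has_real_derivative deriv u t) (at t)" and dv: "(v has_real_derivative deriv v t) (at t)"
   and ddu: "(deriv u has_real_derivative deriv (deriv u) t) (at t)" and ddv: "(deriv v has_real_derivative deriv (deriv v) t) (at t)"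
    using reg I unfolding regular_curve_def by (simp_all add: DERIV_deriv_iff_real_differentiable)
  have S: "speed u v t > 0" by (rule geom(3)[OF reg I])
  have c: "speed u v = (\<lambda>s. sqrt ((deriv u s)\<^sup>2 + (sin (u s))\<^sup>2 * (deriv v s)\<^sup>2))"
    by (auto simp: speed_def)
  have pos: "(deriv u t)\<^sup>2 + (sin (u t))\<^sup>2 * (deriv v t)\<^sup>2 > 0" using S by (simp add: speed_def)
  have dq: "((\<lambda>x. (deriv u x)\<^sup>2 + (sin (u x))\<^sup>2 * (deriv v x)\<^sup>2) has_real_derivative
    2 * (deriv u t * deriv (deriv u) t + sin (u t) * cos (u t) * deriv u t * (deriv v t)^2
      + (sin (u t))^2 * deriv v t * deriv (deriv v) t)) (at t)"
    by (rule derivative_eq_intros du dv ddu ddv refl)+ (simp add: algebra_simps power2_eq_square)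
  have e: "speed u v t = sqrt ((deriv u t)\<^sup>2 + (sin (u t))\<^sup>2 * (deriv v t)\<^sup>2)" by (simp add: speed_def)
  show ?thesis unfolding c
    apply (rule DERIV_cong[OF DERIV_chain2[OF DERIV_real_sqrt[OF pos] dq]])
    unfolding e[symmetric] using S by (simp add: field_simps)

qed

lemma alg1:
  fixes al p x S a b s co a2 b2 :: real
  assumes "p > 0" "x > 0" "S > 0" "S^2 = a^2 + s^2 * b^2" "s * b \<noteq> 0"
   and eq: "((al * (p/x) * a * a + p * a2) * S - p * a * ((a * a2 + s * co * a * b^2 + s^2 * b * b2)/S))/S^2 = al * (p/x) * S + p * s * co * b^2/S"
  shows "al * s * b * S^2 = x * (s * b * a2 - s * s * co * b^3 - 2 * a * a * b * co - s * a * b2)"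
proof -
  have E0: "S * p * x * (((al * a * a + x * a2) * S^2 - x * a * (a * a2 + s * co * a * b^2 + s^2 * b * b2)) - (al * S^2 * S^2 + x * s * co * b^2 * S^2)) = 0"
    using eq assms(1-3) by (simp add: field_simps power2_eq_square)
  have E2: "(al * a * a + x * a2) * S^2 - x * a * (a * a2 + s * co * a * b^2 + s^2 * b * b2) = al * S^2 * S^2 + x * s * co * b^2 * S^2"
    using E0 assms(1-3) by simp
  have "s * b * (al * s * b * S^2 - x * (s * b * a2 - s * s * co * b^3 - 2 * a * a * b * co - s * a * b2)) = 0"
    using E2 assms(4) by algebra
  then show ?thesis using assms(5) by simp
qed

lemma EL1_rel:
  assumes reg: "regular_curve u v I" and I: "open I" "t \<in> I"
   and EL: "((\<lambda>s. u s powr \<alpha> * deriv u s / speed u v s) has_real_derivative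
           (\<alpha> * u t powr (\<alpha> - 1) * speed u v t
            + u t powr \<alpha> * sin (u t) * cos (u t) * (deriv v t)\<^sup>2 / speed u v t)) (at t)"
   and sb: "sin (u t) * deriv v t \<noteq> 0"
  shows "\<alpha> * sin (u t) * deriv v t * (speed u v t)^2 = u t * Nm u v t"
proof -
  have du: "(u has_real_derivative deriv u t) (at t)"
   and ddu: "(deriv u has_real_derivative deriv (deriv u) t) (at t)"
    using reg I unfolding regular_curve_def by (simp_all add: DERIV_deriv_iff_real_differentiable)
  have S: "speed u v t > 0" by (rule geom(3)[OF reg I])
  have ut: "u t > 0" using reg I unfolding regular_curve_def by auto
  have pw: "u t powr (\<alpha> - 1) = u t powr \<alpha> / u t" using ut by (simp add: powr_diff)
  have dnum: "((\<lambda>s. u s powr \<alpha> * deriv u s) has_real_derivative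
      (\<alpha> * (u t powr \<alpha> / u t) * deriv u t * deriv u t + u t powr \<alpha> * deriv (deriv u) t)) (at t)"
    apply (rule DERIV_cong[OF DERIV_mult[OF DERIV_fun_powr[OF du ut] ddu]])
    using pw by (simp add: algebra_simps)
  have dP: "((\<lambda>s. u s powr \<alpha> * deriv u s / speed u v s) has_real_derivative
     (((\<alpha> * (u t powr \<alpha> / u t) * deriv u t * deriv u t + u t powr \<alpha> * deriv (deriv u) t) * speed u v t
      - u t powr \<alpha> * deriv u t * ((deriv u t * deriv (deriv u) t + sin (u t) * cos (u t) * deriv u t * (deriv v t)^2
      + (sin (u t))^2 * deriv v t * deriv (deriv v) t) / speed u v t)) / (speed u v t)^2)) (at t)"
    apply (rule DERIV_cong[OF DERIV_divide[OF dnum speed_deriv[OF reg I]]])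
    using S by (simp_all add: power2_eq_square)
  have eq: "(((\<alpha> * (u t powr \<alpha> / u t) * deriv u t * deriv u t + u t powr \<alpha> * deriv (deriv u) t) * speed u v t
      - u t powr \<alpha> * deriv u t * ((deriv u t * deriv (deriv u) t + sin (u t) * cos (u t) * deriv u t * (deriv v t)^2
      + (sin (u t))^2 * deriv v t * deriv (deriv v) t) / speed u v t)) / (speed u v t)^2)
     = \<alpha> * (u t powr \<alpha> / u t) * speed u v t + u t powr \<alpha> * sin (u t) * cos (u t) * (deriv v t)\<^sup>2 / speed u v t"
    using DERIV_unique[OF dP EL] unfolding pw .
  have S2: "(speed u v t)^2 = (deriv u t)^2 + (sin (u t))^2 * (deriv v t)^2"
    unfolding speed_def by (simp add: add_nonneg_nonneg)
  show ?thesis unfolding Nm_def Let_def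
    by (rule alg1[where p = "u t powr \<alpha>", OF _ ut S S2 sb]) (use ut eq in \<open>simp_all add: algebra_simps\<close>)
qed

lemma no_const:
  fixes p q K \<alpha> :: real
  assumes pq: "0 < p" "p < q" "q \<le> pi" and K: "\<forall>y\<in>{p<..<q}. y * y powr \<alpha> * sin y = K"
  shows False
proof -
  let ?S = "{p<..<q}"
  have h0: "(\<alpha> + 1) * sin y + y * cos y = 0" if y: "y \<in> ?S" for y
  proof -
    have yp: "y > 0" using y pq by auto
    have d: "((\<lambda>y. y * y powr \<alpha> * sin y) has_real_derivative
       (y powr \<alpha> * ((\<alpha> + 1) * sin y + y * cos y))) (at y)"
      apply (rule DERIV_cong[OF DERIV_mult[OF DERIV_mult[OF DERIV_ident DERIV_fun_powr[OF DERIV_ident yp]] DERIV_sin]])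
      using yp by (simp add: powr_diff field_simps)
    have "y powr \<alpha> * ((\<alpha> + 1) * sin y + y * cos y) = 0"
      by (rule loc_const_deriv[OF _ y _ d]) (use K in auto)
    then show ?thesis using yp by simp
  qed
  have h1: "(\<alpha> + 2) * cos y - y * sin y = 0" if y: "y \<in> ?S" for y
  proof -
    have d: "((\<lambda>y. (\<alpha> + 1) * sin y + y * cos y) has_real_derivative ((\<alpha> + 2) * cos y - y * sin y)) (at y)"
      by (rule derivative_eq_intros refl)+ (simp add: algebra_simps)
    show ?thesis by (rule loc_const_deriv[OF _ y _ d]) (use h0 in auto)
  qed
  have h2: "- (\<alpha> + 3) * sin y - y * cos y = 0" if y: "y \<in> ?S" for y
  proof -
    have d: "((\<lambda>y. (\<alpha> + 2) * cos y - y * sin y) has_real_derivative (- (\<alpha> + 3) * sin y - y * cos y)) (at y)"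
      by (rule derivative_eq_intros refl)+ (simp add: algebra_simps)
    show ?thesis by (rule loc_const_deriv[OF _ y _ d]) (use h1 in auto)
  qed
  define y where "y = (p + q) / 2"
  have y: "y \<in> ?S" using pq by (auto simp: y_def)
  have "sin y > 0" using y pq by (intro sin_gt_zero) auto
  moreover have "sin y = 0" using h0[OF y] h2[OF y] by (simp add: algebra_simps)
  ultimately show False by simp
qed

lemma Psi_norm: "norm (Psi x y) = 1"
proof -
  have "Psi x y \<bullet> Psi x y = (sin x * cos y) * (sin x * cos y) + (sin x * sin y) * (sin x * sin y) + cos x * cos x"
    by (simp add: Psi_def inner_vec_def sum_3)
  also have "\<dots> = 1" using sin_cos_squared_add[of x] sin_cos_squared_add[of y] by algebra
  finally show ?thesis by (simp add: norm_eq_sqrt_inner)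
qed

lemma alg2:
  fixes al x p s b S N c C :: real
  assumes "S > 0" "al * s * b * S^2 = x * N" "N / S^3 = c" "p * s^2 * b / S = C"
  shows "x * p * s * c = al * C"
proof -
  have N: "N = c * S^3" using assms(1,3) by (simp add: field_simps)
  have C: "C * S = p * s^2 * b" using assms(1,4) by (simp add: field_simps)
  have "S^2 * (x * p * s * c - al * C) * S = 0"
    using assms(2) N C by algebra
  then show ?thesis using assms(1) by simp
qed

lemma fwd:
  assumes al: "\<alpha> \<noteq> 0" and ab: "a < b"
    and reg: "regular_curve u v {a<..<b}"
    and cc: "constant_curvature (curve u v) {a<..<b}"
    and st: "alpha_stationary \<alpha> u v {a<..<b}"
  shows "(\<exists>w. w \<noteq> 0 \<and> NP \<in> great_circle w \<and> curve u v ` {a<..<b} \<subseteq> great_circle w)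
     \<or> (\<exists>r. 0 < r \<and> r < pi \<and> curve u v ` {a<..<b} \<subseteq> circle_N r \<and> \<alpha> = - r * cot r)"
proof -
  define I where "I = {a<..<b}"
  have oI: "open I" and cI: "convex I" by (simp_all add: I_def)
  note reg = reg[folded I_def] and st = st[folded I_def] and cc = cc[folded I_def]
  define Q where "Q = (\<lambda>s. u s powr \<alpha> * (sin (u s))\<^sup>2 * deriv v s / speed u v s)"
  have "\<exists>C. \<forall>t\<in>I. Q t = C"
  proof (rule has_field_derivative_zero_constant[OF cI])
    fix t assume "t \<in> I"
    then show "(Q has_field_derivative 0) (at t within I)"
      using st unfolding alpha_stationary_def Q_def by (auto intro: has_field_derivative_at_within)
  qed
  then obtain C where C: "\<And>t. t \<in> I \<Longrightarrow> Q t = C" by blast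
  have ut: "u t > 0" "u t < pi" "sin (u t) > 0" "speed u v t > 0" "u t powr \<alpha> > 0" if "t \<in> I" for t
  proof -
    show "u t > 0" using reg that unfolding regular_curve_def by auto
    show "u t < pi" by (rule u_lt_pi[OF reg oI that])
    then show "sin (u t) > 0" using \<open>u t > 0\<close> by (intro sin_gt_zero)
    show "speed u v t > 0" by (rule geom(3)[OF reg oI that])
    show "u t powr \<alpha> > 0" using \<open>u t > 0\<close> by simp
  qed
  have du: "(u has_real_derivative deriv u t) (at t)" "(v has_real_derivative deriv v t) (at t)"
   "(deriv u has_real_derivative deriv (deriv u) t) (at t)" if "t \<in> I" for t
    using reg that unfolding regular_curve_def by (simp_all add: DERIV_deriv_iff_real_differentiable)
  show ?thesis
  proof (cases "C = 0")
    case True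
    have dv0: "deriv v t = 0" if t: "t \<in> I" for t
    proof -
      have "u t powr \<alpha> * (sin (u t))\<^sup>2 * deriv v t / speed u v t = 0" using C[OF t] True by (simp add: Q_def)
      then show ?thesis using ut[OF t] by simp
    qed
    have "\<exists>c0. \<forall>t\<in>I. v t = c0"
    proof (rule has_field_derivative_zero_constant[OF cI])
      fix t assume t: "t \<in> I"
      show "(v has_field_derivative 0) (at t within I)"
        using du(2)[OF t] dv0[OF t] by (auto intro: has_field_derivative_at_within)
    qed
    then obtain c0 where c0: "\<And>t. t \<in> I \<Longrightarrow> v t = c0" by blast
    define w :: "real^3" where "w = vector [- sin c0, cos c0, 0]"
    have "w \<noteq> 0"
    proof
      assume "w = 0"
      then have "sin c0 = 0" "cos c0 = 0" unfolding w_def vec_eq_iff forall_3 by auto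
      then show False using sin_cos_squared_add[of c0] by simp
    qed
    moreover have "NP \<in> great_circle w"
    proof -
      have "NP = Psi 0 c0" by (simp add: NP_def Psi_def)
      then have "norm NP = 1" by (metis Psi_norm)
      moreover have "NP \<bullet> w = 0" by (simp add: NP_def w_def inner_vec_def sum_3)
      ultimately show ?thesis by (simp add: great_circle_def)
    qed
    moreover have "curve u v ` I \<subseteq> great_circle w"
    proof
      fix x assume "x \<in> curve u v ` I"
      then obtain t where t: "t \<in> I" "x = curve u v t" by auto
      then have x: "x = Psi (u t) c0" using c0 by (simp add: curve_def)
      have "Psi (u t) c0 \<bullet> w = 0" by (simp add: w_def Psi_def inner_vec_def sum_3 algebra_simps)
      then show "x \<in> great_circle w" unfolding great_circle_def x by (simp add: Psi_norm)
    qed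
    ultimately show ?thesis unfolding I_def by blast
  next
    case False
    obtain c where c: "\<And>t. t \<in> I \<Longrightarrow> curvature (curve u v) t = c"
      using cc unfolding constant_curvature_def by blast
    have key: "u t * u t powr \<alpha> * sin (u t) * c = \<alpha> * C" if t: "t \<in> I" for t
    proof -
      have b: "deriv v t \<noteq> 0" using C[OF t] False by (auto simp: Q_def)
      have sb: "sin (u t) * deriv v t \<noteq> 0" using b ut[OF t] by simp
      have E1: "\<alpha> * sin (u t) * deriv v t * (speed u v t)^2 = u t * Nm u v t"
        by (rule EL1_rel[OF reg oI t _ sb]) (use st t in \<open>auto simp: alpha_stationary_def\<close>)
      have E2: "Nm u v t / speed u v t ^ 3 = c" using c[OF t] geom(4)[OF reg oI t] by simp
      have E3: "u t powr \<alpha> * (sin (u t))^2 * deriv v t / speed u v t = C" using C[OF t] by (simp add: Q_def)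
      show ?thesis using alg2[OF ut(4)[OF t] E1 E2 E3] by simp
    qed
    define t0 where "t0 = (a + b) / 2"
    have t0: "t0 \<in> I" using ab by (simp add: I_def t0_def)
    have cnz: "c \<noteq> 0" using key[OF t0] al False by auto
    have K: "\<And>t. t \<in> I \<Longrightarrow> u t * u t powr \<alpha> * sin (u t) = \<alpha> * C / c"
      using key cnz by (simp add: field_simps)
    have conn: "connected (u ` I)"
    proof (rule connected_continuous_image)
      show "continuous_on I u"
        using du(1) by (intro continuous_at_imp_continuous_on) (auto intro: DERIV_isCont)
      show "connected I" using cI by (simp add: convex_connected)
    qed
    have lt: False if t12: "t1 \<in> I" "t2 \<in> I" "u t1 < u t2" for t1 t2
    proof -
      have sub: "{u t1..u t2} \<subseteq> u ` I" using connected_contains_Icc[OF conn] t12 by auto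
      show False
      proof (rule no_const[of "u t1" "u t2" \<alpha> "\<alpha> * C / c"])
        show "0 < u t1" "u t1 < u t2" "u t2 \<le> pi" using ut t12 by (auto intro: less_imp_le)
        show "\<forall>y\<in>{u t1<..<u t2}. y * y powr \<alpha> * sin y = \<alpha> * C / c"
        proof
          fix y assume "y \<in> {u t1<..<u t2}"
          then have "y \<in> u ` I" using sub by auto
          then show "y * y powr \<alpha> * sin y = \<alpha> * C / c" using K by auto
        qed
      qed
    qed
    define r where "r = u t0"
    have ur: "\<And>t. t \<in> I \<Longrightarrow> u t = r"
      unfolding r_def using lt t0 by (meson linorder_neqE_linordered_idom)
    have r: "0 < r" "r < pi" "sin r > 0" using ut[OF t0] by (auto simp: r_def)
    have du0: "deriv u t = 0" if t: "t \<in> I" for t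
      by (rule loc_const_deriv[OF oI t _ du(1)[OF t]]) (rule ur)
    have ddu0: "deriv (deriv u) t0 = 0"
      by (rule loc_const_deriv[OF oI t0 _ du(3)[OF t0]]) (rule du0)
    have b: "deriv v t0 \<noteq> 0" using C[OF t0] False by (auto simp: Q_def)
    have sb: "sin (u t0) * deriv v t0 \<noteq> 0" using b ut[OF t0] by simp
    have E1: "\<alpha> * sin (u t0) * deriv v t0 * (speed u v t0)^2 = u t0 * Nm u v t0"
      by (rule EL1_rel[OF reg oI t0 _ sb]) (use st t0 in \<open>auto simp: alpha_stationary_def\<close>)
    have S2: "(speed u v t0)^2 = (sin r)^2 * (deriv v t0)^2"
      unfolding speed_def using du0[OF t0] ur[OF t0] by simp
    have "\<alpha> * sin r * deriv v t0 * ((sin r)^2 * (deriv v t0)^2) = r * (- sin r * sin r * cos r * deriv v t0 ^ 3)"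
      using E1 unfolding S2 Nm_def Let_def using du0[OF t0] ddu0 ur[OF t0] by simp
    then have "(sin r)^2 * (deriv v t0)^3 * (\<alpha> * sin r + r * cos r) = 0"
      by (simp add: algebra_simps power2_eq_square power3_eq_cube)
    then have "\<alpha> * sin r + r * cos r = 0" using r b by simp
    then have "\<alpha> = - r * cot r" using r by (simp add: cot_def field_simps)
    moreover have "curve u v ` I \<subseteq> circle_N r"
      using ur by (auto simp: circle_N_def curve_def)
    ultimately show ?thesis using r unfolding I_def by blast
  qed
qed


lemma alg3:
  fixes al p r s co b :: real
  assumes "r > 0" "s > 0" "b \<noteq> 0"
  shows "al * (p / r) * (s * \<bar>b\<bar>) + p * s * co * b^2 / (s * \<bar>b\<bar>) = (p / r) * \<bar>b\<bar> * (al * s + r * co)"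
proof -
  have e: "b^2 = \<bar>b\<bar> * \<bar>b\<bar>" by (simp add: power2_eq_square abs_mult_self_eq)
  have "p * s * co * b^2 / (s * \<bar>b\<bar>) = p * co * \<bar>b\<bar>" unfolding e using assms by (simp add: field_simps)
  then show ?thesis using assms by (simp add: field_simps)
qed
lemma alg4:
  fixes p s b :: real
  assumes "s > 0" "b \<noteq> 0"
  shows "p * s^2 * b / (s * \<bar>b\<bar>) = p * s * sgn b"
  using assms by (cases "b > 0") (auto simp: field_simps power2_eq_square)
lemma alg5:
  fixes p a :: real
  assumes "a \<noteq> 0"
  shows "p * a / \<bar>a\<bar> = sgn a * p"
  using assms by (cases "a > 0") (auto simp: field_simps)
lemma bwd1:
  assumes reg: "regular_curve u v {a<..<b}" and w: "w \<noteq> 0" "NP \<in> great_circle w"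
    "curve u v ` {a<..<b} \<subseteq> great_circle w"
  shows "alpha_stationary \<alpha> u v {a<..<b}"
proof -
  define I where "I = {a<..<b}"
  have oI: "open I" by (simp add: I_def)
  note reg = reg[folded I_def] and w = w[folded I_def]
  have ut: "u t > 0" "u t < pi" "sin (u t) > 0" "speed u v t > 0" "u t powr \<alpha> > 0" if "t \<in> I" for t
  proof -
    show "u t > 0" using reg that unfolding regular_curve_def by auto
    show "u t < pi" by (rule u_lt_pi[OF reg oI that])
    then show "sin (u t) > 0" using \<open>u t > 0\<close> by (intro sin_gt_zero)
    show "speed u v t > 0" by (rule geom(3)[OF reg oI that])
    show "u t powr \<alpha> > 0" using \<open>u t > 0\<close> by simp
  qed
  have du: "(u has_real_derivative deriv u t) (at t)" "(v has_real_derivative deriv v t) (at t)"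
   "(deriv u has_real_derivative deriv (deriv u) t) (at t)" if "t \<in> I" for t
    using reg that unfolding regular_curve_def by (simp_all add: DERIV_deriv_iff_real_differentiable)
  have w3: "w $ 3 = 0" using w(2) by (simp add: great_circle_def NP_def inner_vec_def sum_3)
  have w12: "(w $ 1)^2 + (w $ 2)^2 > 0"
  proof -
    have "w $ 1 \<noteq> 0 \<or> w $ 2 \<noteq> 0" using w(1) w3 by (auto simp: vec_eq_iff forall_3)
    then show ?thesis by (auto simp: add_pos_nonneg add_nonneg_pos)
  qed
  define F where "F = (\<lambda>t. cos (v t) * w $ 1 + sin (v t) * w $ 2)"
  have F0: "F t = 0" if t: "t \<in> I" for t
  proof -
    have "curve u v t \<bullet> w = 0" using w(3) t by (auto simp: great_circle_def)
    then have "sin (u t) * F t = 0"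
      by (simp add: curve_def Psi_def inner_vec_def sum_3 w3 F_def algebra_simps)
    then show ?thesis using ut(3)[OF t] by simp
  qed
  have dv0: "deriv v t = 0" if t: "t \<in> I" for t
  proof -
    define G where "G = - sin (v t) * w $ 1 + cos (v t) * w $ 2"
    have "(F t)^2 + G^2 = (w $ 1)^2 + (w $ 2)^2"
      unfolding F_def G_def using sin_cos_squared_add[of "v t"] by algebra
    then have G: "G \<noteq> 0" using F0[OF t] w12 by auto
    have d: "(F has_real_derivative G * deriv v t) (at t)"
      unfolding F_def G_def by (rule derivative_eq_intros du(2)[OF t] refl)+ (simp add: algebra_simps)
    have "G * deriv v t = 0" by (rule loc_const_deriv[OF oI t _ d]) (rule F0)
    then show ?thesis using G by simp
  qed
  have Sabs: "speed u v t = \<bar>deriv u t\<bar>" if "t \<in> I" for t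
    using dv0[OF that] by (simp add: speed_def)
  show ?thesis unfolding alpha_stationary_def I_def[symmetric]
  proof (intro ballI conjI)
    fix t assume t: "t \<in> I"
    show "((\<lambda>s. u s powr \<alpha> * (sin (u s))\<^sup>2 * deriv v s / speed u v s) has_real_derivative 0) (at t)"
      by (rule zero_deriv_on[OF oI t]) (simp add: dv0)
    have a0: "deriv u t \<noteq> 0" using Sabs[OF t] ut(4)[OF t] by auto
    have cont: "isCont (deriv u) t" using du(3)[OF t] by (rule DERIV_isCont)
    have ev: "eventually (\<lambda>s. u s powr \<alpha> * deriv u s / speed u v s = sgn (deriv u t) * u s powr \<alpha>) (nhds t)"
      using ev_sign[OF cont a0] eventually_nhds_in_open[OF oI t]
    proof eventually_elim
      case (elim s)
      then have "deriv u s \<noteq> 0" using a0 by (auto simp: sgn_0_0)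
      then show ?case using Sabs[of s] elim alg5 by simp
    qed
    have dd: "((\<lambda>s. sgn (deriv u t) * u s powr \<alpha>) has_real_derivative
       sgn (deriv u t) * (\<alpha> * u t powr (\<alpha> - of_nat 1) * deriv u t)) (at t)"
      by (rule DERIV_cmult[OF DERIV_fun_powr[OF du(1)[OF t] ut(1)[OF t]]])
    show "((\<lambda>s. u s powr \<alpha> * deriv u s / speed u v s) has_real_derivative
          (\<alpha> * u t powr (\<alpha> - 1) * speed u v t
           + u t powr \<alpha> * sin (u t) * cos (u t) * (deriv v t)\<^sup>2 / speed u v t)) (at t)"
    proof (rule DERIV_cong_ev[THEN iffD2, OF refl ev _ dd])
      have "sgn (deriv u t) * deriv u t = \<bar>deriv u t\<bar>" by (simp add: sgn_mult_self_eq abs_sgn)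
      then show "\<alpha> * u t powr (\<alpha> - 1) * speed u v t + u t powr \<alpha> * sin (u t) * cos (u t) * (deriv v t)\<^sup>2 / speed u v t
         = sgn (deriv u t) * (\<alpha> * u t powr (\<alpha> - of_nat 1) * deriv u t)"
        using Sabs[OF t] dv0[OF t] by (simp add: algebra_simps)
    qed
  qed
qed


lemma bwd2:
  assumes reg: "regular_curve u v {a<..<b}" and r: "0 < r" "r < pi"
    "curve u v ` {a<..<b} \<subseteq> circle_N r" and al: "\<alpha> = - r * cot r"
  shows "alpha_stationary \<alpha> u v {a<..<b}"
proof -
  define I where "I = {a<..<b}"
  have oI: "open I" by (simp add: I_def)
  note reg = reg[folded I_def] and r = r[folded I_def]
  have ur: "u t = r" if t: "t \<in> I" for t
  proof -
    have "curve u v t \<in> circle_N r" using r(3) t by blast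
    then obtain z where "curve u v t = Psi r z" unfolding circle_N_def by blast
    then have "(curve u v t) $ 3 = (Psi r z) $ 3" by simp
    then have "cos (u t) = cos r" by (simp add: curve_def Psi_def)
    moreover have "0 \<le> u t" "u t \<le> pi" using reg t unfolding regular_curve_def by auto
    ultimately show ?thesis using r(1,2) by (rule_tac cos_inj_pi) auto
  qed
  have sr: "sin r > 0" using r by (intro sin_gt_zero)
  have S: "speed u v t > 0" if "t \<in> I" for t by (rule geom(3)[OF reg oI that])
  have du: "(u has_real_derivative deriv u t) (at t)" "(v has_real_derivative deriv v t) (at t)"
   "(deriv v has_real_derivative deriv (deriv v) t) (at t)" if "t \<in> I" for t
    using reg that unfolding regular_curve_def by (simp_all add: DERIV_deriv_iff_real_differentiable)
  have du0: "deriv u t = 0" if t: "t \<in> I" for t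
    by (rule loc_const_deriv[OF oI t _ du(1)[OF t]]) (rule ur)
  have Sabs: "speed u v t = sin r * \<bar>deriv v t\<bar>" if t: "t \<in> I" for t
  proof -
    have "speed u v t = sqrt ((sin r * deriv v t)^2)" by (simp add: speed_def du0[OF t] ur[OF t] power_mult_distrib)
    also have "\<dots> = sin r * \<bar>deriv v t\<bar>" using sr by (simp add: abs_mult)
    finally show ?thesis .
  qed
  have b0: "deriv v t \<noteq> 0" if "t \<in> I" for t using S[OF that] Sabs[OF that] by auto
  show ?thesis unfolding alpha_stationary_def I_def[symmetric]
  proof (intro ballI conjI)
    fix t assume t: "t \<in> I"
    have d0: "((\<lambda>s. u s powr \<alpha> * deriv u s / speed u v s) has_real_derivative 0) (at t)"
      by (rule zero_deriv_on[OF oI t]) (simp add: du0)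
    have pw: "r powr (\<alpha> - 1) = r powr \<alpha> / r" using r by (simp add: powr_diff)
    have "\<alpha> * sin r = - r * cos r" using al sr by (simp add: cot_def)
    then have "\<alpha> * sin r + r * cos r = 0" by simp
    then have "\<alpha> * r powr (\<alpha> - 1) * speed u v t + r powr \<alpha> * sin r * cos r * (deriv v t)\<^sup>2 / speed u v t
       = (r powr \<alpha> / r) * \<bar>deriv v t\<bar> * (\<alpha> * sin r + r * cos r)"
      unfolding Sabs[OF t] pw using alg3[OF r(1) sr b0[OF t]] by simp
    also have "\<dots> = 0" using \<open>\<alpha> * sin r + r * cos r = 0\<close> by simp
    finally show "((\<lambda>s. u s powr \<alpha> * deriv u s / speed u v s) has_real_derivative
          (\<alpha> * u t powr (\<alpha> - 1) * speed u v t
           + u t powr \<alpha> * sin (u t) * cos (u t) * (deriv v t)\<^sup>2 / speed u v t)) (at t)"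
      using d0 ur[OF t] by simp
    have cont: "isCont (deriv v) t" using du(3)[OF t] by (rule DERIV_isCont)
    have ev: "eventually (\<lambda>s. u s powr \<alpha> * (sin (u s))\<^sup>2 * deriv v s / speed u v s = r powr \<alpha> * sin r * sgn (deriv v t)) (nhds t)"
      using ev_sign[OF cont b0[OF t]] eventually_nhds_in_open[OF oI t]
    proof eventually_elim
      case (elim s)
      then have "deriv v s \<noteq> 0" using b0 by auto
      then show ?case using elim ur[of s] Sabs[of s] alg4[OF sr] by simp
    qed
    show "((\<lambda>s. u s powr \<alpha> * (sin (u s))\<^sup>2 * deriv v s / speed u v s) has_real_derivative 0) (at t)"
      by (rule DERIV_cong_ev[THEN iffD2, OF refl ev refl DERIV_const])
  qed
qed


theorem proposition3p3:
  fixes \<alpha> a b :: real and u v :: "real \<Rightarrow> real"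
  assumes "\<alpha> \<noteq> 0" and "a < b"
    and "regular_curve u v {a<..<b}"
    and "constant_curvature (curve u v) {a<..<b}"
  shows "alpha_stationary \<alpha> u v {a<..<b} \<longleftrightarrow>
    ((\<exists>w. w \<noteq> 0 \<and> NP \<in> great_circle w \<and> curve u v ` {a<..<b} \<subseteq> great_circle w)
     \<or> (\<exists>r. 0 < r \<and> r < pi \<and> curve u v ` {a<..<b} \<subseteq> circle_N r \<and> \<alpha> = - r * cot r))"
proof
  assume "alpha_stationary \<alpha> u v {a<..<b}"
  then show "(\<exists>w. w \<noteq> 0 \<and> NP \<in> great_circle w \<and> curve u v ` {a<..<b} \<subseteq> great_circle w)
     \<or> (\<exists>r. 0 < r \<and> r < pi \<and> curve u v ` {a<..<b} \<subseteq> circle_N r \<and> \<alpha> = - r * cot r)"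
    using fwd assms by blast
next
  assume "(\<exists>w. w \<noteq> 0 \<and> NP \<in> great_circle w \<and> curve u v ` {a<..<b} \<subseteq> great_circle w)
     \<or> (\<exists>r. 0 < r \<and> r < pi \<and> curve u v ` {a<..<b} \<subseteq> circle_N r \<and> \<alpha> = - r * cot r)"
  then show "alpha_stationary \<alpha> u v {a<..<b}"
  proof
    assume "\<exists>w. w \<noteq> 0 \<and> NP \<in> great_circle w \<and> curve u v ` {a<..<b} \<subseteq> great_circle w"
    then obtain w where "w \<noteq> 0" "NP \<in> great_circle w" "curve u v ` {a<..<b} \<subseteq> great_circle w" by blast
    then show ?thesis using bwd1 assms(3) by blast
  next
    assume "\<exists>r. 0 < r \<and> r < pi \<and> curve u v ` {a<..<b} \<subseteq> circle_N r \<and> \<alpha> = - r * cot r"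
    then obtain r where "0 < r" "r < pi" "curve u v ` {a<..<b} \<subseteq> circle_N r" "\<alpha> = - r * cot r" by blast
    then show ?thesis using bwd2 assms(3) by blast
  qed
qed

end
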